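(* Let $\mathcal{S}$ be a finite state space (possibly containing terminal states), let $\pi=\pi_d$ be a policy, and let $\mathbf{P}^{\pi}\in\mathbb{R}^{|\mathcal{S}|\times|\mathcal{S}|}$ be the induced state-transition matrix, $\mathbf{P}^{\pi}(s,s')$ being the probability of moving from $s$ to $s'$ under $\pi$, with the rows of terminal states set to zero. Let $\gamma\in(0,1)$ and $\lambda>0$. Define the successor representation $\mathbf{\Psi}^\pi=(\mathbf{I}-\gamma\mathbf{P}^\pi)^{-1}$ and the default representation $\mathbf{Z}=\big[\operatorname{diag}(\exp(-\mathbf{r}/\lambda))-\mathbf{P}^{\pi_d}\big]^{-1}$, where $\mathbf{r}\in\mathbb{R}^{|\mathcal{S}|}$ is the vector of state rewards and $\exp$ acts entrywise. Suppose the reward function is constant and negative: $r(s)=r(s')<0$ for all $s,s'\in\mathcal{S}$. Then $\mathbf{\Psi}^\pi$ and $\mathbf{Z}$ share the same set of eigenvectors. Furthermore, if $\mathbf{\Psi}^\pi$ and $\mathbf{Z}$ are symmetric, then, ordering the eigenvectors of each matrix by their corresponding eigenvalues, the $i$-th eigenvectors of $\mathbf{\Psi}^\pi$ and $\mathbf{Z}$ are equal, and the $i$-th eigenvalues $\mu_{\mathrm{SR},i}$ of $\mathbf{\Psi}^\pi$ and $\mu_{\mathrm{DR},i}$ of $\mathbf{Z}$ satisfy $$\mu_{\mathrm{SR},i}=\Big[\gamma\Big(\mu_{\mathrm{DR},i}^{-1}-\exp\big(-r(s)/\lambda\big)+\gamma^{-1}\Big)\Big]^{-1}.$$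
   Context: Setting: a Markov decision process with finite state space $\mathcal{S}$, finite action space $\mathcal{A}$, transition function $p$, reward function $r:\mathcal{S}\to\mathbb{R}$, and a default policy $\pi_d$ assigning nonzero probability to every state-action pair. The transition matrix induced by a policy has rows for terminal states set to all zeros (and rows of non-terminal states summing to one). $\gamma$ is the discount factor of the successor representation and $\lambda>0$ is the relative importance of the deviation (KL) cost in the linearly solvable MDP defining the default representation. *)

theory Defs
  imports "HOL-Analysis.Analysis"
begin

definition is_dist :: "('b::finite \<Rightarrow> real) \<Rightarrow> bool" where
  "is_dist f \<longleftrightarrow> (\<forall>x. 0 \<le> f x) \<and> (\<Sum>x\<in>UNIV. f x) = 1"

definition trans_matrix ::
  "('s::finite \<Rightarrow> 'a::finite \<Rightarrow> 's \<Rightarrow> real) \<Rightarrow> 's set \<Rightarrow> ('s \<Rightarrow> 'a \<Rightarrow> real) \<Rightarrow> real^'s^'s" where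
  "trans_matrix p T pol = (\<chi> s s'. if s \<in> T then 0 else (\<Sum>a\<in>UNIV. pol s a * p s a s'))"

definition SR :: "real \<Rightarrow> real^'s^'s \<Rightarrow> real^'s^'s" where
  "SR \<gamma> P = matrix_inv (mat 1 - \<gamma> *\<^sub>R P)"

definition DR :: "real \<Rightarrow> ('s::finite \<Rightarrow> real) \<Rightarrow> real^'s^'s \<Rightarrow> real^'s^'s" where
  "DR lam r P = matrix_inv ((\<chi> i j. if i = j then exp (- r i / lam) else 0) - P)"

text \<open>Complexification of a real matrix / vector (eigenvectors may be complex in general).\<close>
definition cmat :: "real^'n^'m \<Rightarrow> complex^'n^'m" where
  "cmat A = (\<chi> i j. complex_of_real (A $ i $ j))"

definition is_eigvec_c :: "complex^'n^'n \<Rightarrow> complex^'n \<Rightarrow> bool" where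
  "is_eigvec_c A v \<longleftrightarrow> v \<noteq> 0 \<and> (\<exists>\<mu>. A *v v = \<mu> *s v)"

definition is_eigpair :: "real^'n^'n \<Rightarrow> real^'n \<Rightarrow> real \<Rightarrow> bool" where
  "is_eigpair A v \<mu> \<longleftrightarrow> v \<noteq> 0 \<and> A *v v = \<mu> *s v"

end

theory Submission imports Defs begin

lemma inv_props:
  fixes A :: "'a::field^'n^'n"
  assumes "invertible A"
  shows "A ** matrix_inv A = mat 1" "matrix_inv A ** A = mat 1"
proof -
  have "\<exists>A'. A ** A' = mat 1 \<and> A' ** A = mat 1" using assms unfolding invertible_def by blast
  hence "A ** matrix_inv A = mat 1 \<and> matrix_inv A ** A = mat 1"
    unfolding matrix_inv_def by (rule someI_ex)
  thus "A ** matrix_inv A = mat 1" "matrix_inv A ** A = mat 1" by auto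
qed

lemma invertible_ker:
  fixes A :: "'a::field^'n^'n"
  assumes "\<And>x. A *v x = 0 \<Longrightarrow> x = 0"
  shows "invertible A"
  using assms invertible_left_inverse matrix_left_invertible_ker by blast

lemma cmat_mult: "cmat (X ** Y) = cmat X ** cmat Y"
  by (simp add: cmat_def matrix_matrix_mult_def vec_eq_iff)

lemma cmat_one: "cmat (mat 1) = mat 1"
  by (simp add: cmat_def mat_def vec_eq_iff)

lemma eig_inv:
  fixes M N :: "complex^'n^'n"
  assumes "M ** N = mat 1" "N ** M = mat 1"
  shows "is_eigvec_c N v \<longleftrightarrow> is_eigvec_c M v"
proof -
  have *: "is_eigvec_c M v" if h1: "M ** N = mat 1" and h2: "is_eigvec_c N v" for M N :: "complex^'n^'n"
  proof -
    obtain \<mu> where v0: "v \<noteq> 0" and e: "N *v v = \<mu> *s v" using h2 unfolding is_eigvec_c_def by blast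
    have "v = M *v (N *v v)" by (simp add: matrix_vector_mul_assoc h1)
    also have "\<dots> = \<mu> *s (M *v v)" by (simp add: e vector_scalar_commute)
    finally have vv: "v = \<mu> *s (M *v v)" .
    have "\<mu> \<noteq> 0" using vv v0 by auto
    hence "M *v v = inverse \<mu> *s v" using vv
      by (metis (no_types, lifting) vector_smult_assoc vector_smult_lid left_inverse)
    thus ?thesis using v0 unfolding is_eigvec_c_def by blast
  qed
  show ?thesis using *[OF assms(1)] *[OF assms(2)] by blast
qed

lemma eig_affine:
  fixes M N :: "complex^'n^'n"
  assumes "\<And>v. N *v v = a *s (M *v v) + b *s v" "a \<noteq> 0"
  shows "is_eigvec_c N v \<longleftrightarrow> is_eigvec_c M v"
proof
  assume "is_eigvec_c N v"
  then obtain \<mu> where v0: "v \<noteq> 0" and e: "N *v v = \<mu> *s v" unfolding is_eigvec_c_def by blast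
  have "M *v v = (inverse a * (\<mu> - b)) *s v"
    using e assms by (simp add: vec_eq_iff field_simps)
  thus "is_eigvec_c M v" using v0 unfolding is_eigvec_c_def by blast
next
  assume "is_eigvec_c M v"
  then obtain \<mu> where v0: "v \<noteq> 0" and e: "M *v v = \<mu> *s v" unfolding is_eigvec_c_def by blast
  have "N *v v = (a * \<mu> + b) *s v"
    using e assms by (simp add: vec_eq_iff field_simps)
  thus "is_eigvec_c N v" using v0 unfolding is_eigvec_c_def by blast
qed


lemma cmat_comb:
  fixes X :: "real^'n^'n"
  shows "cmat (a *\<^sub>R X + b *\<^sub>R mat 1) *v v = of_real a *s (cmat X *v v) + of_real b *s v"
proof -
  have "(cmat (a *\<^sub>R X + b *\<^sub>R mat 1) *v v) $ i = (of_real a *s (cmat X *v v) + of_real b *s v) $ i" for i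
  proof -
    have "(cmat (a *\<^sub>R X + b *\<^sub>R mat 1) *v v) $ i
        = (\<Sum>j\<in>UNIV. of_real a * (of_real (X$i$j) * v$j) + (if i = j then of_real b * v$j else 0))"
      by (auto simp: cmat_def matrix_vector_mult_def mat_def intro!: sum.cong simp: algebra_simps)
    also have "\<dots> = of_real a * (\<Sum>j\<in>UNIV. of_real (X$i$j) * v$j) + of_real b * v$i"
      by (simp add: sum.distrib sum_distrib_left)
    finally show ?thesis by (simp add: cmat_def matrix_vector_mult_def)
  qed
  thus ?thesis by (simp add: vec_eq_iff)
qed

lemma inv_eig_real:
  fixes X :: "real^'n^'n"
  assumes "invertible X" "v \<noteq> 0" "matrix_inv X *v v = \<mu> *s v"
  shows "\<mu> \<noteq> 0" "X *v v = inverse \<mu> *s v"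
proof -
  have "v = X *v (matrix_inv X *v v)" by (simp add: matrix_vector_mul_assoc inv_props[OF assms(1)])
  also have "\<dots> = \<mu> *s (X *v v)" by (simp add: assms(3) vector_scalar_commute)
  finally have vv: "v = \<mu> *s (X *v v)" .
  show "\<mu> \<noteq> 0" using vv assms(2) by auto
  thus "X *v v = inverse \<mu> *s v" using vv
    by (metis (no_types, lifting) vector_smult_assoc vector_smult_lid left_inverse)
qed

lemma eig_inv_real:
  fixes X :: "real^'n^'n"
  assumes "invertible X" "v \<noteq> 0" "X *v v = \<kappa> *s v"
  shows "\<kappa> \<noteq> 0" "matrix_inv X *v v = inverse \<kappa> *s v"
proof -
  have "v = matrix_inv X *v (X *v v)" by (simp add: matrix_vector_mul_assoc inv_props[OF assms(1)])
  also have "\<dots> = \<kappa> *s (matrix_inv X *v v)" by (simp add: assms(3) vector_scalar_commute)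
  finally have vv: "v = \<kappa> *s (matrix_inv X *v v)" .
  show "\<kappa> \<noteq> 0" using vv assms(2) by auto
  thus "matrix_inv X *v v = inverse \<kappa> *s v" using vv
    by (metis (no_types, lifting) vector_smult_assoc vector_smult_lid left_inverse)
qed

lemma eig_bound:
  fixes P :: "real^'n^'n"
  assumes nn: "\<And>i j. P$i$j \<ge> 0" and rs: "\<And>i. (\<Sum>j\<in>UNIV. P$i$j) \<le> 1"
    and v0: "v \<noteq> 0" and e: "P *v v = l *s v"
  shows "\<bar>l\<bar> \<le> 1"
proof -
  define f where "f j = \<bar>v$j\<bar>" for j
  obtain i where i: "\<And>j. f j \<le> f i"
  proof -
    have "Max (range f) \<in> range f" by (rule Max_in) auto
    then obtain i where "Max (range f) = f i" by blast
    moreover have "\<And>j. f j \<le> Max (range f)" by (rule Max_ge) auto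
    ultimately show ?thesis using that by metis
  qed
  have fi: "f i > 0"
  proof (rule ccontr)
    assume "\<not> f i > 0"
    hence "\<And>j. v$j = 0" using i unfolding f_def by (metis abs_ge_zero abs_le_zero_iff order.trans not_less)
    thus False using v0 by (simp add: vec_eq_iff)
  qed
  have "\<bar>l\<bar> * f i = \<bar>(P *v v)$i\<bar>" using e by (simp add: f_def abs_mult)
  also have "\<dots> = \<bar>\<Sum>j\<in>UNIV. P$i$j * v$j\<bar>" by (simp add: matrix_vector_mult_def)
  also have "\<dots> \<le> (\<Sum>j\<in>UNIV. \<bar>P$i$j * v$j\<bar>)" by (rule sum_abs)
  also have "\<dots> \<le> (\<Sum>j\<in>UNIV. P$i$j * f i)"
    by (rule sum_mono) (simp add: abs_mult nn f_def[symmetric] i mult_left_mono)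
  also have "\<dots> = (\<Sum>j\<in>UNIV. P$i$j) * f i" by (simp add: sum_distrib_right)
  also have "\<dots> \<le> 1 * f i" using rs fi by (intro mult_right_mono) auto
  finally show ?thesis using fi by simp
qed


lemma trans_props:
  fixes p :: "'s::finite \<Rightarrow> 'a::finite \<Rightarrow> 's \<Rightarrow> real"
  assumes p_dist: "\<And>s a. is_dist (p s a)" and pol_dist: "\<And>s. is_dist (pol s)"
  shows "trans_matrix p T pol $ i $ j \<ge> 0" "(\<Sum>j\<in>UNIV. trans_matrix p T pol $ i $ j) \<le> 1"
proof -
  show "trans_matrix p T pol $ i $ j \<ge> 0"
    using p_dist pol_dist unfolding trans_matrix_def is_dist_def
    by (auto intro!: sum_nonneg mult_nonneg_nonneg)
  have "(\<Sum>j\<in>UNIV. \<Sum>a\<in>UNIV. pol i a * p i a j) = (\<Sum>a\<in>UNIV. pol i a * (\<Sum>j\<in>UNIV. p i a j))"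
    by (subst sum.swap) (simp add: sum_distrib_left)
  also have "\<dots> = 1" using p_dist pol_dist unfolding is_dist_def by simp
  finally show "(\<Sum>j\<in>UNIV. trans_matrix p T pol $ i $ j) \<le> 1"
    unfolding trans_matrix_def by (cases "i \<in> T") simp_all
qed

theorem theorem3p1:
  fixes p :: "'s::finite \<Rightarrow> 'a::finite \<Rightarrow> 's \<Rightarrow> real"
    and T :: "'s set" and pol :: "'s \<Rightarrow> 'a \<Rightarrow> real"
    and r :: "'s \<Rightarrow> real" and \<gamma> lam :: real
  assumes p_dist: "\<And>s a. is_dist (p s a)"
    and pol_dist: "\<And>s. is_dist (pol s)"
    and pol_pos: "\<And>s a. pol s a > 0"
    and gamma: "0 < \<gamma>" "\<gamma> < 1"
    and lambda: "lam > 0"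
    and r_const: "\<And>s s'. r s = r s'"
    and r_neg: "\<And>s. r s < 0"
  shows
    "(\<forall>v. is_eigvec_c (cmat (SR \<gamma> (trans_matrix p T pol))) v
          \<longleftrightarrow> is_eigvec_c (cmat (DR lam r (trans_matrix p T pol))) v)
     \<and>
     ((transpose (SR \<gamma> (trans_matrix p T pol)) = SR \<gamma> (trans_matrix p T pol)
       \<and> transpose (DR lam r (trans_matrix p T pol)) = DR lam r (trans_matrix p T pol))
      \<longrightarrow>
      (\<forall>s v \<nu>. is_eigpair (DR lam r (trans_matrix p T pol)) v \<nu> \<longrightarrow>
          is_eigpair (SR \<gamma> (trans_matrix p T pol)) v
            (inverse (\<gamma> * (inverse \<nu> - exp (- r s / lam) + inverse \<gamma>))))
      \<and>
      (\<forall>s v \<mu>. is_eigpair (SR \<gamma> (trans_matrix p T pol)) v \<mu> \<longrightarrow>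
          (\<exists>\<nu>. is_eigpair (DR lam r (trans_matrix p T pol)) v \<nu> \<and>
                \<mu> = inverse (\<gamma> * (inverse \<nu> - exp (- r s / lam) + inverse \<gamma>))))
      \<and>
      (\<forall>s v1 v2 \<nu>1 \<nu>2. is_eigpair (DR lam r (trans_matrix p T pol)) v1 \<nu>1
          \<and> is_eigpair (DR lam r (trans_matrix p T pol)) v2 \<nu>2 \<and> \<nu>1 < \<nu>2 \<longrightarrow>
          inverse (\<gamma> * (inverse \<nu>1 - exp (- r s / lam) + inverse \<gamma>))
            < inverse (\<gamma> * (inverse \<nu>2 - exp (- r s / lam) + inverse \<gamma>))))"
proof -
  define P where "P = trans_matrix p T pol"
  obtain s0 :: 's where True by simp
  define c where "c = exp (- r s0 / lam)"
  have cs: "\<And>s. exp (- r s / lam) = c" unfolding c_def using r_const by metis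
  have c1: "c > 1" unfolding c_def using r_neg[of s0] lambda by (simp add: divide_neg_pos)
  have nn: "\<And>i j. P$i$j \<ge> 0" and rs: "\<And>i. (\<Sum>j\<in>UNIV. P$i$j) \<le> 1"
    unfolding P_def using trans_props[OF p_dist pol_dist] by auto
  have bnd: "\<And>v l. v \<noteq> 0 \<Longrightarrow> P *v v = l *s v \<Longrightarrow> \<bar>l\<bar> \<le> 1"
    using eig_bound[OF nn rs] by blast
  define A where "A = mat 1 - \<gamma> *\<^sub>R P"
  define D where "D = (\<chi> i j. if i = j then exp (- r i / lam) else 0) - P"
  have Dc: "D = c *\<^sub>R mat 1 - P" unfolding D_def using cs by (simp add: vec_eq_iff mat_def)
  have DA: "D = (1/\<gamma>) *\<^sub>R A + (c - 1/\<gamma>) *\<^sub>R mat 1"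
    unfolding Dc A_def using gamma by (simp add: algebra_simps)
  have SR: "SR \<gamma> (trans_matrix p T pol) = matrix_inv A" unfolding SR_def A_def P_def ..
  have DR: "DR lam r (trans_matrix p T pol) = matrix_inv D" unfolding DR_def D_def P_def ..
  have Av: "A *v v = v - \<gamma> *s (P *v v)" for v
    unfolding A_def by (simp add: matrix_vector_mult_diff_rdistrib scalar_mult_eq_scaleR matrix_vector_mult_scaleR scaleR_matrix_vector_assoc[symmetric])
  have Dv: "D *v v = c *s v - P *v v" for v
    unfolding Dc by (simp add: matrix_vector_mult_diff_rdistrib scalar_mult_eq_scaleR matrix_vector_mult_scaleR scaleR_matrix_vector_assoc[symmetric])
  have invA: "invertible A"
  proof (rule invertible_ker)
    fix x assume "A *v x = 0"
    hence "P *v x = (1/\<gamma>) *s x" using gamma unfolding Av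
      by (simp add: vec_eq_iff field_simps)
    show "x = 0"
    proof (rule ccontr)
      assume "x \<noteq> 0"
      hence "\<bar>1/\<gamma>\<bar> \<le> 1" using bnd \<open>P *v x = (1/\<gamma>) *s x\<close> by blast
      thus False using gamma by (simp add: field_simps)
    qed
  qed
  have invD: "invertible D"
  proof (rule invertible_ker)
    fix x assume "D *v x = 0"
    hence "P *v x = c *s x" unfolding Dv by (simp add: vec_eq_iff)
    show "x = 0"
    proof (rule ccontr)
      assume "x \<noteq> 0"
      hence "\<bar>c\<bar> \<le> 1" using bnd \<open>P *v x = c *s x\<close> by blast
      thus False using c1 by simp
    qed
  qed
  have DAv: "D *v v = (1/\<gamma>) *s (A *v v) + (c - 1/\<gamma>) *s v" for v
    unfolding DA by (simp add: matrix_vector_mult_add_rdistrib scalar_mult_eq_scaleR matrix_vector_mult_scaleR scaleR_matrix_vector_assoc[symmetric])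
  have part1: "is_eigvec_c (cmat (matrix_inv A)) v \<longleftrightarrow> is_eigvec_c (cmat (matrix_inv D)) v" for v
  proof -
    have "is_eigvec_c (cmat (matrix_inv A)) v \<longleftrightarrow> is_eigvec_c (cmat A) v"
      by (rule eig_inv) (simp_all add: cmat_mult[symmetric] inv_props[OF invA] cmat_one)
    also have "\<dots> \<longleftrightarrow> is_eigvec_c (cmat D) v"
      by (rule eig_affine[symmetric, where a="of_real (1/\<gamma>)" and b="of_real (c - 1/\<gamma>)"])
         (use gamma in \<open>simp_all add: DA cmat_comb\<close>)
    also have "\<dots> \<longleftrightarrow> is_eigvec_c (cmat (matrix_inv D)) v"
      by (rule eig_inv[symmetric]) (simp_all add: cmat_mult[symmetric] inv_props[OF invD] cmat_one)
    finally show ?thesis .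
  qed
  have part2: "is_eigpair (matrix_inv A) v (inverse (\<gamma> * (inverse \<nu> - c + inverse \<gamma>)))"
    if "is_eigpair (matrix_inv D) v \<nu>" for v \<nu>
  proof -
    have v0: "v \<noteq> 0" and e: "matrix_inv D *v v = \<nu> *s v" using that unfolding is_eigpair_def by auto
    have "D *v v = inverse \<nu> *s v" by (rule inv_eig_real[OF invD v0 e])
    moreover have "A *v v = \<gamma> *s (D *v v) - (\<gamma> * c - 1) *s v"
      using DAv[of v] gamma by (simp add: vec_eq_iff field_simps)
    ultimately have "A *v v = \<gamma> *s (inverse \<nu> *s v) - (\<gamma> * c - 1) *s v" by simp
    also have "\<dots> = (\<gamma> * (inverse \<nu> - c + inverse \<gamma>)) *s v"
      using gamma by (simp add: vec_eq_iff algebra_simps)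
    finally have "A *v v = (\<gamma> * (inverse \<nu> - c + inverse \<gamma>)) *s v" .
    hence "matrix_inv A *v v = inverse (\<gamma> * (inverse \<nu> - c + inverse \<gamma>)) *s v"
      by (rule eig_inv_real(2)[OF invA v0])
    thus ?thesis using v0 unfolding is_eigpair_def by auto
  qed
  have part3: "\<exists>\<nu>. is_eigpair (matrix_inv D) v \<nu> \<and> \<mu> = inverse (\<gamma> * (inverse \<nu> - c + inverse \<gamma>))"
    if "is_eigpair (matrix_inv A) v \<mu>" for v \<mu>
  proof -
    have v0: "v \<noteq> 0" and e: "matrix_inv A *v v = \<mu> *s v" using that unfolding is_eigpair_def by auto
    have mu0: "\<mu> \<noteq> 0" and Ae: "A *v v = inverse \<mu> *s v" using inv_eig_real[OF invA v0 e] by auto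
    define k where "k = inverse (\<gamma> * \<mu>) + c - 1/\<gamma>"
    have "D *v v = k *s v"
      using DAv[of v] Ae gamma unfolding k_def by (simp add: vec_eq_iff field_simps)
    from eig_inv_real[OF invD v0 this] have k0: "k \<noteq> 0" and De: "matrix_inv D *v v = inverse k *s v" by auto
    have "\<mu> = inverse (\<gamma> * (inverse (inverse k) - c + inverse \<gamma>))"
      using gamma mu0 unfolding k_def by (simp add: field_simps)
    thus ?thesis using De v0 unfolding is_eigpair_def by blast
  qed
  have pos: "\<nu> > 0 \<and> \<bar>c - inverse \<nu>\<bar> \<le> 1" if "is_eigpair (matrix_inv D) v \<nu>" for v \<nu>
  proof -
    have v0: "v \<noteq> 0" and e: "matrix_inv D *v v = \<nu> *s v" using that unfolding is_eigpair_def by auto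
    have "D *v v = inverse \<nu> *s v" by (rule inv_eig_real[OF invD v0 e])
    hence "P *v v = (c - inverse \<nu>) *s v" using Dv[of v] by (simp add: vec_eq_iff algebra_simps)
    hence b: "\<bar>c - inverse \<nu>\<bar> \<le> 1" using bnd v0 by blast
    hence "inverse \<nu> > 0" using c1 by linarith
    thus ?thesis using b by simp
  qed
  have part4: "inverse (\<gamma> * (inverse \<nu>1 - c + inverse \<gamma>)) < inverse (\<gamma> * (inverse \<nu>2 - c + inverse \<gamma>))"
    if "is_eigpair (matrix_inv D) v1 \<nu>1" "is_eigpair (matrix_inv D) v2 \<nu>2" "\<nu>1 < \<nu>2" for v1 v2 \<nu>1 \<nu>2
  proof -
    define x1 where "x1 = c - inverse \<nu>1"
    define x2 where "x2 = c - inverse \<nu>2"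
    have p1: "\<nu>1 > 0" "\<bar>x1\<bar> \<le> 1" using pos[OF that(1)] x1_def by auto
    have p2: "\<nu>2 > 0" "\<bar>x2\<bar> \<le> 1" using pos[OF that(2)] x2_def by auto
    have "inverse \<nu>2 < inverse \<nu>1" using p1 p2 that(3) by (simp add: less_imp_inverse_less)
    hence x12: "x1 < x2" unfolding x1_def x2_def by simp
    have e1: "\<gamma> * (inverse \<nu>1 - c + inverse \<gamma>) = 1 - \<gamma> * x1" using gamma unfolding x1_def by (simp add: field_simps)
    have e2: "\<gamma> * (inverse \<nu>2 - c + inverse \<gamma>) = 1 - \<gamma> * x2" using gamma unfolding x2_def by (simp add: field_simps)
    have g2: "\<gamma> * x2 < 1"
    proof -
      have "\<gamma> * x2 \<le> \<gamma> * 1" using p2 gamma by (intro mult_left_mono) auto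
      thus ?thesis using gamma by linarith
    qed
    have "\<gamma> * x1 < \<gamma> * x2" using x12 gamma by simp
    hence "inverse (1 - \<gamma> * x1) < inverse (1 - \<gamma> * x2)" using g2
      by (intro less_imp_inverse_less) auto
    thus ?thesis unfolding e1 e2 .
  qed
  show ?thesis
    unfolding SR DR cs using part1 part2 part3 part4 by blast
qed

end
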